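(* Consider the system $\mathbf{x}_{k+1}=f_k(\mathbf{x}_k,\mathbf{w}_k)$, $\mathbf{y}_k=g_k(\mathbf{x}_k,\mathbf{v}_k)$, $k\in\mathbb{N}_0$, and assume that for every $k\in\mathbb{N}_0$ the uncertain variables $\mathbf{w}_0,\dots,\mathbf{w}_k,\mathbf{v}_0,\dots,\mathbf{v}_k,\mathbf{x}_0$ are unrelated. Then for every $k\in\mathbb{Z}_+$ and every $(x_{0:k-1},y_{0:k-1})\in\llbracket\mathbf{x}_{0:k-1},\mathbf{y}_{0:k-1}\rrbracket$, \[ \llbracket\mathbf{x}_k\,|\,x_{0:k-1},y_{0:k-1}\rrbracket=\llbracket\mathbf{x}_k\,|\,x_{k-1}\rrbracket, \] and for every $k\in\mathbb{N}_0$ and every $(x_{0:k},y_{0:k-1})\in\llbracket\mathbf{x}_{0:k},\mathbf{y}_{0:k-1}\rrbracket$, \[ \llbracket\mathbf{y}_k\,|\,x_{0:k},y_{0:k-1}\rrbracket=\llbracket\mathbf{y}_k\,|\,x_k\rrbracket . \]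
   Context: Uncertain variables: fix a nonempty set $\Omega$. An uncertain variable is a (measurable) function $\mathbf{x}\colon\Omega\to\mathcal{X}$; a realization is $x=\mathbf{x}(\omega)$. Tuples such as $\mathbf{x}_{0:k}:=(\mathbf{x}_0,\dots,\mathbf{x}_k)$ are regarded as uncertain variables $\omega\mapsto(\mathbf{x}_0(\omega),\dots,\mathbf{x}_k(\omega))$. Range: $\llbracket\mathbf{x}\rrbracket:=\{\mathbf{x}(\omega):\omega\in\Omega\}$; joint range $\llbracket\mathbf{u}_1,\dots,\mathbf{u}_r\rrbracket:=\{(\mathbf{u}_1(\omega),\dots,\mathbf{u}_r(\omega)):\omega\in\Omega\}$. Conditional range: $\llbracket\mathbf{x}\,|\,y\rrbracket:=\{\mathbf{x}(\omega):\omega\in\Omega,\ \mathbf{y}(\omega)=y\}$ (conditioning on several values means conditioning on the tuple); for $k=0$ the conditioning on $y_{0:-1}$ is empty. Unrelatedness: $\mathbf{u}_1,\dots,\mathbf{u}_r$ are unrelated if $\llbracket\mathbf{u}_1,\dots,\mathbf{u}_r\rrbracket=\llbracket\mathbf{u}_1\rrbracket\times\cdots\times\llbracket\mathbf{u}_r\rrbracket$. System: $f_k\colon\llbracket\mathbf{x}_k\rrbracket\times\llbracket\mathbf{w}_k\rrbracket\to\llbracket\mathbf{x}_{k+1}\rrbracket$, $g_k\colon\llbracket\mathbf{x}_k\rrbracket\times\llbracket\mathbf{v}_k\rrbracket\to\llbracket\mathbf{y}_k\rrbracket$ are maps, with state, process noise, measurement and measurement noise valued in Euclidean spaces, and $\mathbf{x}_{k+1}(\omega)=f_k(\mathbf{x}_k(\omega),\mathbf{w}_k(\omega))$,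 $\mathbf{y}_k(\omega)=g_k(\mathbf{x}_k(\omega),\mathbf{v}_k(\omega))$ for all $\omega\in\Omega$. *)

theory Defs
  imports "HOL-Analysis.Analysis"
begin

text \<open>Uncertain variables are functions from the sample type 'o (Omega) to a value type.\<close>

definition urange :: "('o \<Rightarrow> 'a) \<Rightarrow> 'a set" where
  "urange X = {X \<omega> | \<omega>. True}"

definition crange :: "('o \<Rightarrow> 'a) \<Rightarrow> ('o \<Rightarrow> 'b) \<Rightarrow> 'b \<Rightarrow> 'a set" where
  "crange X Y y = {X \<omega> | \<omega>. Y \<omega> = y}"

text \<open>Tuple u_{0:k-1} as a list of length k.\<close>
definition utup :: "(nat \<Rightarrow> 'o \<Rightarrow> 'a) \<Rightarrow> nat \<Rightarrow> 'o \<Rightarrow> 'a list" where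
  "utup u k \<omega> = map (\<lambda>i. u i \<omega>) [0..<k]"

definition unrelated_wvx ::
  "nat \<Rightarrow> (nat \<Rightarrow> 'o \<Rightarrow> 'w) \<Rightarrow> (nat \<Rightarrow> 'o \<Rightarrow> 'v) \<Rightarrow> ('o \<Rightarrow> 'x) \<Rightarrow> bool" where
  "unrelated_wvx k w v x0 \<longleftrightarrow>
     urange (\<lambda>\<omega>. (\<lambda>i\<in>{..k}. w i \<omega>, \<lambda>i\<in>{..k}. v i \<omega>, x0 \<omega>)) =
     (PiE {..k} (\<lambda>i. urange (w i))) \<times> (PiE {..k} (\<lambda>i. urange (v i))) \<times> urange x0"

end

theory Submission
  imports Defs
begin

lemma pick:
  assumes "unrelated_wvx k w v x0"
  shows "\<exists>\<omega>. (\<forall>i\<le>k. w i \<omega> = w i (a i)) \<and> (\<forall>i\<le>k. v i \<omega> = v i (b i)) \<and> x0 \<omega> = x0 c"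
proof -
  have "(\<lambda>i\<in>{..k}. w i (a i), \<lambda>i\<in>{..k}. v i (b i), x0 c) \<in>
     (PiE {..k} (\<lambda>i. urange (w i))) \<times> (PiE {..k} (\<lambda>i. urange (v i))) \<times> urange x0"
    by (auto simp: urange_def)
  then have "(\<lambda>i\<in>{..k}. w i (a i), \<lambda>i\<in>{..k}. v i (b i), x0 c) \<in>
     urange (\<lambda>\<omega>. (\<lambda>i\<in>{..k}. w i \<omega>, \<lambda>i\<in>{..k}. v i \<omega>, x0 \<omega>))"
    using assms unfolding unrelated_wvx_def by simp
  then obtain \<omega> where e: "(\<lambda>i\<in>{..k}. w i (a i)) = (\<lambda>i\<in>{..k}. w i \<omega>)"
      "(\<lambda>i\<in>{..k}. v i (b i)) = (\<lambda>i\<in>{..k}. v i \<omega>)" "x0 c = x0 \<omega>"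
    unfolding urange_def by auto
  have "\<forall>i\<le>k. w i \<omega> = w i (a i)"
  proof (intro allI impI)
    fix i assume "i \<le> k"
    then show "w i \<omega> = w i (a i)" using fun_cong[OF e(1), of i] by simp
  qed
  moreover have "\<forall>i\<le>k. v i \<omega> = v i (b i)"
  proof (intro allI impI)
    fix i assume "i \<le> k"
    then show "v i \<omega> = v i (b i)" using fun_cong[OF e(2), of i] by simp
  qed
  ultimately show ?thesis using e(3) by metis
qed

lemma prop_x:
  assumes dyn: "\<And>k \<omega>. x (Suc k) \<omega> = f k (x k \<omega>) (w k \<omega>)"
    and "x 0 \<omega> = x 0 \<omega>0" and "\<forall>i<n. w i \<omega> = w i \<omega>0"
  shows "x n \<omega> = x n \<omega>0"
  using assms(3)
proof (induction n)
  case 0 then show ?case using assms(2) by simp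
next
  case (Suc n) then show ?case by (simp add: dyn)
qed

lemma utup_eq: "(\<forall>i<k. u i \<omega> = u i \<omega>0) \<Longrightarrow> utup u k \<omega> = utup u k \<omega>0"
  unfolding utup_def by simp

theorem mainTheorem8:
  fixes x :: "nat \<Rightarrow> 'o \<Rightarrow> 'x::euclidean_space"
    and w :: "nat \<Rightarrow> 'o \<Rightarrow> 'w::euclidean_space"
    and y :: "nat \<Rightarrow> 'o \<Rightarrow> 'y::euclidean_space"
    and v :: "nat \<Rightarrow> 'o \<Rightarrow> 'v::euclidean_space"
    and f :: "nat \<Rightarrow> 'x \<Rightarrow> 'w \<Rightarrow> 'x"
    and g :: "nat \<Rightarrow> 'x \<Rightarrow> 'v \<Rightarrow> 'y"
  assumes dyn: "\<And>k \<omega>. x (Suc k) \<omega> = f k (x k \<omega>) (w k \<omega>)"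
    and obs: "\<And>k \<omega>. y k \<omega> = g k (x k \<omega>) (v k \<omega>)"
    and unrel: "\<And>k. unrelated_wvx k w v (x 0)"
  shows "(\<forall>k\<ge>1. \<forall>xs ys. (xs, ys) \<in> urange (\<lambda>\<omega>. (utup x k \<omega>, utup y k \<omega>)) \<longrightarrow>
            crange (x k) (\<lambda>\<omega>. (utup x k \<omega>, utup y k \<omega>)) (xs, ys)
              = crange (x k) (x (k - 1)) (xs ! (k - 1)))
       \<and> (\<forall>k. \<forall>xs ys. (xs, ys) \<in> urange (\<lambda>\<omega>. (utup x (Suc k) \<omega>, utup y k \<omega>)) \<longrightarrow>
            crange (y k) (\<lambda>\<omega>. (utup x (Suc k) \<omega>, utup y k \<omega>)) (xs, ys)
              = crange (y k) (x k) (xs ! k))"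
proof (intro conjI allI impI)
  fix k :: nat and xs ys
  assume k1: "k \<ge> 1" and m: "(xs, ys) \<in> urange (\<lambda>\<omega>. (utup x k \<omega>, utup y k \<omega>))"
  then obtain \<omega>0 where xs: "xs = utup x k \<omega>0" and ys: "ys = utup y k \<omega>0"
    unfolding urange_def by auto
  obtain j where kj: "k = Suc j" using k1 by (cases k) auto
  have nth: "xs ! (k - 1) = x j \<omega>0" using xs kj by (simp add: utup_def del: upt_Suc)
  show "crange (x k) (\<lambda>\<omega>. (utup x k \<omega>, utup y k \<omega>)) (xs, ys)
              = crange (x k) (x (k - 1)) (xs ! (k - 1))"
  proof
    show "crange (x k) (\<lambda>\<omega>. (utup x k \<omega>, utup y k \<omega>)) (xs, ys)
              \<subseteq> crange (x k) (x (k - 1)) (xs ! (k - 1))"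
    proof
      fix z assume "z \<in> crange (x k) (\<lambda>\<omega>. (utup x k \<omega>, utup y k \<omega>)) (xs, ys)"
      then obtain \<omega> where "z = x k \<omega>" "xs = utup x k \<omega>" unfolding crange_def by auto
      moreover then have "x j \<omega> = xs ! (k-1)" using kj by (simp add: utup_def del: upt_Suc)
      ultimately show "z \<in> crange (x k) (x (k - 1)) (xs ! (k - 1))"
        unfolding crange_def using kj by auto
    qed
  next
    show "crange (x k) (x (k - 1)) (xs ! (k - 1))
       \<subseteq> crange (x k) (\<lambda>\<omega>. (utup x k \<omega>, utup y k \<omega>)) (xs, ys)"
    proof
      fix z assume "z \<in> crange (x k) (x (k - 1)) (xs ! (k - 1))"
      then obtain \<omega>1 where z: "z = x k \<omega>1" and e1: "x j \<omega>1 = x j \<omega>0"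
        unfolding crange_def using kj nth by auto
      obtain \<omega> where w: "\<forall>i\<le>j. w i \<omega> = w i (if i < j then \<omega>0 else \<omega>1)"
        and v: "\<forall>i\<le>j. v i \<omega> = v i ((\<lambda>_. \<omega>0) i)" and x0: "x 0 \<omega> = x 0 \<omega>0"
        using pick[OF unrel[of j], of "\<lambda>i. if i < j then \<omega>0 else \<omega>1" "\<lambda>_. \<omega>0" \<omega>0] by blast
      have xi: "x i \<omega> = x i \<omega>0" if "i \<le> j" for i
        using prop_x[of x f w, OF dyn x0] w that by auto
      have "utup x k \<omega> = xs" unfolding xs using kj xi by (intro utup_eq) auto
      moreover have "utup y k \<omega> = ys" unfolding ys using kj xi v
        by (intro utup_eq) (auto simp: obs)
      moreover have "x k \<omega> = z" using kj z xi[of j] e1 w by (simp add: dyn)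
      ultimately show "z \<in> crange (x k) (\<lambda>\<omega>. (utup x k \<omega>, utup y k \<omega>)) (xs, ys)"
        unfolding crange_def by auto
    qed
  qed
next
  fix k :: nat and xs ys
  assume m: "(xs, ys) \<in> urange (\<lambda>\<omega>. (utup x (Suc k) \<omega>, utup y k \<omega>))"
  then obtain \<omega>0 where xs: "xs = utup x (Suc k) \<omega>0" and ys: "ys = utup y k \<omega>0"
    unfolding urange_def by auto
  have nth: "xs ! k = x k \<omega>0" using xs by (simp add: utup_def del: upt_Suc)
  show "crange (y k) (\<lambda>\<omega>. (utup x (Suc k) \<omega>, utup y k \<omega>)) (xs, ys)
              = crange (y k) (x k) (xs ! k)"
  proof
    show "crange (y k) (\<lambda>\<omega>. (utup x (Suc k) \<omega>, utup y k \<omega>)) (xs, ys)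
              \<subseteq> crange (y k) (x k) (xs ! k)"
    proof
      fix z assume "z \<in> crange (y k) (\<lambda>\<omega>. (utup x (Suc k) \<omega>, utup y k \<omega>)) (xs, ys)"
      then obtain \<omega> where "z = y k \<omega>" "xs = utup x (Suc k) \<omega>" unfolding crange_def by auto
      moreover then have "x k \<omega> = xs ! k" by (simp add: utup_def del: upt_Suc)
      ultimately show "z \<in> crange (y k) (x k) (xs ! k)"
        unfolding crange_def by auto
    qed
  next
    show "crange (y k) (x k) (xs ! k)
       \<subseteq> crange (y k) (\<lambda>\<omega>. (utup x (Suc k) \<omega>, utup y k \<omega>)) (xs, ys)"
    proof
      fix z assume "z \<in> crange (y k) (x k) (xs ! k)"
      then obtain \<omega>1 where z: "z = y k \<omega>1" and e1: "x k \<omega>1 = x k \<omega>0"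
        unfolding crange_def using nth by auto
      obtain \<omega> where w: "\<forall>i\<le>k. w i \<omega> = w i ((\<lambda>_. \<omega>0) i)"
        and v: "\<forall>i\<le>k. v i \<omega> = v i (if i < k then \<omega>0 else \<omega>1)" and x0: "x 0 \<omega> = x 0 \<omega>0"
        using pick[OF unrel[of k], of "\<lambda>_. \<omega>0" "\<lambda>i. if i < k then \<omega>0 else \<omega>1" \<omega>0] by blast
      have xi: "x i \<omega> = x i \<omega>0" if "i \<le> k" for i
        using prop_x[of x f w, OF dyn x0] w that by auto
      have "utup x (Suc k) \<omega> = xs" unfolding xs using xi by (intro utup_eq) auto
      moreover have "utup y k \<omega> = ys" unfolding ys using xi v
        by (intro utup_eq) (auto simp: obs)
      moreover have "y k \<omega> = z" using z xi[of k] e1 v by (simp add: obs)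
      ultimately show "z \<in> crange (y k) (\<lambda>\<omega>. (utup x (Suc k) \<omega>, utup y k \<omega>)) (xs, ys)"
        unfolding crange_def by auto
    qed
  qed
qed

end
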